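(* For $\nu\in[0,\infty)$ and $\mu\in\mathbb R$ let $$S_\nu(\mu):=\frac12\inf_{A\geq\Phi}\int_{\mathbb R}\bigl|A'(x)-\phi_{\mu,\nu}(x)\bigr|\,\mathrm dx ,$$ where the infimum is over cumulative distribution functions $A$ (with density $A'$) satisfying $A(x)\geq\Phi(x)$ for all $x$. Then: (i) $S_\nu$ is a cumulative distribution function for every $\nu\in[0,\infty)$. (ii) For $\nu\notin\{0,1,\infty\}$, $$S_\nu(\mu)=\Phi\!\left(\frac{\mu-\sqrt\nu\sqrt{\mu^2+(\nu-1)\ln\nu}}{1-\nu}\right)-\Phi\!\left(\frac{\sqrt\nu\,\mu-\sqrt{\mu^2+(\nu-1)\ln\nu}}{1-\nu}\right).$$ (iii) For $0<\nu<\infty$ the inverse cdf is $S_\nu^{-1}(\epsilon)=\min_{x\in(\epsilon,1)}\bigl[\sqrt\nu\,\Phi^{-1}(x)-\Phi^{-1}(x-\epsilon)\bigr]$. (iv) $S_0(\mu)=\lim_{\nu\to\infty}S_\nu(\sqrt\nu\,\mu)=\Phi(\mu)$. (v) $S_1(\mu)=\max\{2\Phi(\mu/2)-1,0\}$. (vi) $S_\nu(\mu)=S_{1/\nu}(\mu/\sqrt\nu)$, equivalently $S_\nu^{-1}(\epsilon)=\sqrt\nu\,S_{1/\nu}^{-1}(\epsilon)$.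
   Context: $\phi_{\mu,\nu}$ and $\Phi_{\mu,\nu}$ denote the density and cumulative distribution function of the normal distribution with mean $\mu$ and variance $\nu$; $\phi=\phi_{0,1}$ and $\Phi=\Phi_{0,1}$ are the standard normal density and cdf; $\ln$ is the natural logarithm. *)

theory Defs
  imports "HOL-Probability.Probability"
begin

(* Normal distribution N(mu, nu) with mean mu and VARIANCE nu, as a measure on the reals.
   For nu = 0 it is the point mass at mu (degenerate normal). *)
definition gauss :: "real \<Rightarrow> real \<Rightarrow> real measure" where
  "gauss mu nu = (if nu = 0 then return borel mu
                  else density lborel (\<lambda>x. ennreal (normal_density mu (sqrt nu) x)))"

definition Phi :: "real \<Rightarrow> real" where
  "Phi x = cdf (gauss 0 1) x"

definition Phi_inv :: "real \<Rightarrow> real" where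
  "Phi_inv p = Inf {x. p \<le> Phi x}"

(* total variation distance  sup_B |P B - Q B|  (= 1/2 int |p - q| when densities exist) *)
definition tv_dist :: "real measure \<Rightarrow> real measure \<Rightarrow> real" where
  "tv_dist P Q = (SUP B \<in> sets borel. \<bar>measure P B - measure Q B\<bar>)"

definition S :: "real \<Rightarrow> real \<Rightarrow> real" where
  "S nu mu = Inf {tv_dist A (gauss mu nu) | A. real_distribution A \<and> (\<forall>x. Phi x \<le> cdf A x)}"

definition S_inv :: "real \<Rightarrow> real \<Rightarrow> real" where
  "S_inv nu eps = Inf {mu. eps \<le> S nu mu}"

end

theory Submission
  imports Defs
begin

lemma sets_gauss[simp, measurable_cong]: "sets (gauss m v) = sets borel"
  by (simp add: gauss_def)

lemma space_gauss[simp]: "space (gauss m v) = UNIV"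
  using sets_eq_imp_space_eq[OF sets_gauss] by simp

lemma real_distribution_gauss: assumes "v \<ge> 0" shows "real_distribution (gauss m v)"
proof (cases "v = 0")
  case True
  then show ?thesis
    by (simp add: gauss_def real_distribution_def real_distribution_axioms_def prob_space_return)
next
  case False
  with assms show ?thesis
    using prob_space_normal_density[where \<mu>=m and \<sigma>="sqrt v"]
    by (simp add: gauss_def real_distribution_def real_distribution_axioms_def)
qed

lemma gauss_density: "v > 0 \<Longrightarrow> gauss m v = density lborel (\<lambda>x. ennreal (normal_density m (sqrt v) x))"
  by (simp add: gauss_def)

lemma measure_gauss_singleton:
  assumes "v > 0" shows "measure (gauss m v) {a} = 0"
proof -
  have "emeasure (gauss m v) {a} = (\<integral>\<^sup>+ y. ennreal (normal_density m (sqrt v) y) * indicator {a} y \<partial>lborel)"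
    using assms by (simp add: gauss_density emeasure_density)
  also have "\<dots> = (\<integral>\<^sup>+ y. ennreal (normal_density m (sqrt v) a) * indicator {a} y \<partial>lborel)"
    by (intro nn_integral_cong) (auto split: split_indicator)
  also have "\<dots> = 0" by (simp add: nn_integral_cmult_indicator)
  finally show ?thesis by (simp add: measure_def)
qed

lemma isCont_cdf_gauss: "v > 0 \<Longrightarrow> isCont (cdf (gauss m v)) x"
  using finite_borel_measure.isCont_cdf[OF real_distribution.finite_borel_measure_M[OF real_distribution_gauss]]
    measure_gauss_singleton by simp

lemma isCont_Phi[continuous_intros]: "isCont Phi x"
  using isCont_cdf_gauss[where m=0 and v=1 and x=x] unfolding Phi_def[abs_def] by simp

lemma continuous_on_Phi: "continuous_on X Phi"
  by (simp add: continuous_at_imp_continuous_on isCont_Phi)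

lemma isCont_Phi_comp[continuous_intros]: "isCont f x \<Longrightarrow> isCont (\<lambda>x. Phi (f x)) x"
  using isCont_Phi continuous_at_compose[of x f Phi] by (simp add: o_def)

lemma Phi_nonneg: "Phi x \<ge> 0" and Phi_le1: "Phi x \<le> 1"
  using real_distribution.cdf_bounded_prob[OF real_distribution_gauss[of 1 0]]
    finite_borel_measure.cdf_nonneg[OF real_distribution.finite_borel_measure_M[OF real_distribution_gauss[of 1 0]]]
  by (auto simp: Phi_def)

lemma Phi_mono: "x \<le> y \<Longrightarrow> Phi x \<le> Phi y"
  using finite_borel_measure.cdf_nondecreasing[OF real_distribution.finite_borel_measure_M[OF real_distribution_gauss[of 1 0]]]
  by (auto simp: Phi_def)

lemma Phi_at_bot: "(Phi \<longlongrightarrow> 0) at_bot"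
  using finite_borel_measure.cdf_lim_at_bot[OF real_distribution.finite_borel_measure_M[OF real_distribution_gauss[of 1 0]]]
  by (simp add: Phi_def[abs_def])

lemma Phi_at_top: "(Phi \<longlongrightarrow> 1) at_top"
  using real_distribution.cdf_lim_at_top_prob[OF real_distribution_gauss[of 1 0]]
  by (simp add: Phi_def[abs_def])


lemma distributed_gauss:
  assumes "v > 0" shows "distributed (gauss m v) lborel (\<lambda>x. x) (\<lambda>x. ennreal (normal_density m (sqrt v) x))"
  unfolding distributed_def
proof (intro conjI)
  show "distr (gauss m v) lborel (\<lambda>x. x) = density lborel (\<lambda>x. ennreal (normal_density m (sqrt v) x))"
    using assms by (simp add: distr_id2 gauss_density)
qed simp_all

lemma gauss01_eq: "gauss 0 1 = density lborel (\<lambda>x. ennreal (std_normal_density x))"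
  by (simp add: gauss_def)

lemma cdf_gauss:
  assumes "v > 0" shows "cdf (gauss m v) t = Phi ((t - m) / sqrt v)"
proof -
  interpret prob_space "gauss m v" using real_distribution_gauss[of v m] assms
    by (simp add: real_distribution_def)
  have "distributed (gauss m v) lborel (\<lambda>x. (x - m) / sqrt v) (\<lambda>x. ennreal (std_normal_density x))"
    using normal_standard_normal_convert[of "sqrt v" "\<lambda>x. x" m] distributed_gauss[OF assms, of m] assms by simp
  then have d: "distr (gauss m v) lborel (\<lambda>x. (x - m) / sqrt v) = gauss 0 1"
    by (simp add: distributed_def gauss01_eq)
  have "Phi ((t - m) / sqrt v) = measure (distr (gauss m v) lborel (\<lambda>x. (x - m) / sqrt v)) {..(t - m) / sqrt v}"
    by (simp add: Phi_def cdf_def d)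
  also have "\<dots> = measure (gauss m v) ((\<lambda>x. (x - m) / sqrt v) -` {..(t - m) / sqrt v} \<inter> space (gauss m v))"
    by (rule measure_distr) simp_all
  also have "(\<lambda>x. (x - m) / sqrt v) -` {..(t - m) / sqrt v} \<inter> space (gauss m v) = {..t}"
  proof -
    have "sqrt v > 0" using assms by simp
    then have "(x - m) / sqrt v \<le> (t - m) / sqrt v \<longleftrightarrow> x \<le> t" for x
      by (simp add: divide_le_cancel)
    then show ?thesis by auto
  qed
  finally show ?thesis by (simp add: cdf_def)
qed

lemma measure_Iio_gauss: assumes "v > 0" shows "measure (gauss m v) {..<t} = cdf (gauss m v) t"
proof -
  interpret real_distribution "gauss m v" using real_distribution_gauss[of v m] assms by simp
  have "{..t} = {..<t} \<union> {t}" by auto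
  then have "measure (gauss m v) {..t} = measure (gauss m v) {..<t} + measure (gauss m v) {t}"
    using finite_measure_Union[of "{..<t}" "{t}"] by simp
  then show ?thesis using measure_gauss_singleton[OF assms] by (simp add: cdf_def)
qed

lemma measure_Ioi_gauss: assumes "v \<ge> 0" shows "measure (gauss m v) {t<..} = 1 - cdf (gauss m v) t"
proof -
  interpret real_distribution "gauss m v" using real_distribution_gauss[of v m] assms by simp
  have "{t<..} = UNIV - {..t}" by auto
  then show ?thesis using prob_compl[of "{..t}"] by (simp add: cdf_def)
qed

lemma measure_Ici_gauss: assumes "v > 0" shows "measure (gauss m v) {t..} = 1 - cdf (gauss m v) t"
proof -
  interpret real_distribution "gauss m v" using real_distribution_gauss[of v m] assms by simp
  have "{t..} = UNIV - {..<t}" by auto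
  then show ?thesis using measure_Iio_gauss[OF assms] prob_compl[of "{..<t}"] by simp
qed

lemma Phi_minus: "Phi (- x) = 1 - Phi x"
proof -
  interpret prob_space "gauss 0 1" using real_distribution_gauss[of 1 0] by (simp add: real_distribution_def)
  have "distributed (gauss 0 1) lborel (\<lambda>x. 0 + (-1) * x) (\<lambda>x. ennreal (normal_density (0 + (-1) * 0) (\<bar>-1\<bar> * 1) x))"
    by (rule normal_density_affine) (use distributed_gauss[of 1 0] in auto)
  then have d: "distr (gauss 0 1) lborel uminus = gauss 0 1"
    by (simp add: distributed_def gauss01_eq)
  have "Phi (- x) = measure (distr (gauss 0 1) lborel uminus) {..-x}"
    by (simp add: Phi_def cdf_def d)
  also have "\<dots> = measure (gauss 0 1) (uminus -` {..-x} \<inter> space (gauss 0 1))"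
    by (rule measure_distr) simp_all
  also have "uminus -` {..-x} \<inter> space (gauss 0 1) = {x..}" by auto
  finally show ?thesis using measure_Ici_gauss[of 1 0 x] by (simp add: Phi_def)
qed

lemma Phi_0: "Phi 0 = 1/2"
  using Phi_minus[of 0] by simp

lemma nd01_anti: assumes "a\<^sup>2 \<le> b\<^sup>2" shows "normal_density 0 1 b \<le> normal_density 0 1 a"
proof -
  have "exp (- (b\<^sup>2 / 2)) \<le> exp (- (a\<^sup>2 / 2))" using assms by simp
  then show ?thesis by (simp add: normal_density_def divide_right_mono)
qed

lemma Phi_strict_mono:
  assumes "x < y" shows "Phi x < Phi y"
proof -
  define c where "c = min (normal_density 0 1 x) (normal_density 0 1 y)"
  have cpos: "c > 0" by (simp add: c_def normal_density_pos)
  have low: "c \<le> normal_density 0 1 z" if "x \<le> z" "z \<le> y" for z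
  proof (cases "z \<ge> 0")
    case True
    then have "z\<^sup>2 \<le> y\<^sup>2" using that by (intro power_mono) auto
    then have "normal_density 0 1 y \<le> normal_density 0 1 z" by (rule nd01_anti)
    then show ?thesis by (simp add: c_def)
  next
    case False
    then have "(-z)\<^sup>2 \<le> (-x)\<^sup>2" using that by (intro power_mono) auto
    then have "z\<^sup>2 \<le> x\<^sup>2" by simp
    then have "normal_density 0 1 x \<le> normal_density 0 1 z" by (rule nd01_anti)
    then show ?thesis by (simp add: c_def)
  qed
  interpret real_distribution "gauss 0 1" using real_distribution_gauss[of 1 0] by simp
  have "emeasure (gauss 0 1) {x<..y} = (\<integral>\<^sup>+ z. ennreal (normal_density 0 1 z) * indicator {x<..y} z \<partial>lborel)"
    by (simp add: gauss01_eq emeasure_density)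
  also have "\<dots> \<ge> (\<integral>\<^sup>+ z. ennreal c * indicator {x<..y} z \<partial>lborel)"
    by (intro nn_integral_mono) (auto split: split_indicator intro!: ennreal_leI low)
  finally have "ennreal (c * (y - x)) \<le> emeasure (gauss 0 1) {x<..y}"
    using assms cpos by (simp add: nn_integral_cmult_indicator ennreal_mult)
  then have "c * (y - x) \<le> measure (gauss 0 1) {x<..y}"
    by (simp add: emeasure_eq_measure)
  moreover have "measure (gauss 0 1) {x<..y} = Phi y - Phi x"
    using cdf_diff_eq[OF assms] by (simp add: Phi_def)
  moreover have "c * (y - x) > 0" using cpos assms by simp
  ultimately show ?thesis by simp
qed


lemma Phi_less_iff: "Phi x < Phi y \<longleftrightarrow> x < y"
proof
  assume "Phi x < Phi y"
  then show "x < y" using Phi_mono[of y x] by (cases "x < y") auto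
qed (rule Phi_strict_mono)

lemma Phi_le_iff: "Phi x \<le> Phi y \<longleftrightarrow> x \<le> y"
  using Phi_less_iff[of y x] by auto

lemma Phi_inj: "Phi x = Phi y \<longleftrightarrow> x = y"
  using Phi_le_iff[of x y] Phi_le_iff[of y x] by auto

lemma Phi_pos: "Phi x > 0"
  using Phi_strict_mono[of "x - 1" x] Phi_nonneg[of "x - 1"] by simp

lemma Phi_less1: "Phi x < 1"
  using Phi_strict_mono[of x "x + 1"] Phi_le1[of "x + 1"] by simp

lemma Phi_surj: assumes "0 < p" "p < 1" shows "\<exists>t. Phi t = p"
proof -
  have "eventually (\<lambda>t. Phi t < p) at_bot"
    using Phi_at_bot assms(1) order_tendstoD(2) by blast
  then obtain a where a: "Phi a < p" by (auto simp: eventually_at_bot_linorder)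
  have "eventually (\<lambda>t. Phi t > p) at_top"
    using Phi_at_top assms(2) order_tendstoD(1) by blast
  then obtain b where b: "Phi b > p" by (auto simp: eventually_at_top_linorder)
  have "Phi a < Phi b" using a b by simp
  then have "a \<le> b" by (simp add: Phi_less_iff)
  then show ?thesis using IVT'[of Phi a p b] a b continuous_on_Phi by auto
qed

lemma Phi_inv_eq: assumes "Phi t = p" shows "Phi_inv p = t"
proof -
  have "{x. p \<le> Phi x} = {t..}" using assms by (auto simp: Phi_le_iff)
  then show ?thesis by (simp add: Phi_inv_def)
qed

lemma Phi_inv_Phi[simp]: "Phi_inv (Phi t) = t"
  by (rule Phi_inv_eq) simp

lemma Phi_Phi_inv: assumes "0 < p" "p < 1" shows "Phi (Phi_inv p) = p"
proof -
  obtain t where "Phi t = p" using Phi_surj[OF assms] by blast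
  then show ?thesis using Phi_inv_eq[of t p] by simp
qed

lemma Phi_inv_le_iff: assumes "0 < p" "p < 1" shows "Phi_inv p \<le> t \<longleftrightarrow> p \<le> Phi t"
  using Phi_le_iff[of "Phi_inv p" t] Phi_Phi_inv[OF assms] by simp

lemma le_Phi_inv_iff: assumes "0 < p" "p < 1" shows "t \<le> Phi_inv p \<longleftrightarrow> Phi t \<le> p"
  using Phi_le_iff[of t "Phi_inv p"] Phi_Phi_inv[OF assms] by simp

lemma Phi_inv_mono: assumes "0 < p" "p \<le> q" "q < 1" shows "Phi_inv p \<le> Phi_inv q"
proof -
  have "Phi (Phi_inv p) \<le> Phi (Phi_inv q)" using assms Phi_Phi_inv[of p] Phi_Phi_inv[of q] by simp
  then show ?thesis by (simp add: Phi_le_iff)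
qed

lemma Phi_inv_one_minus: assumes "0 < p" "p < 1" shows "Phi_inv (1 - p) = - Phi_inv p"
  by (rule Phi_inv_eq) (simp add: Phi_minus Phi_Phi_inv assms)


lemma tv_bdd:
  assumes "real_distribution P" "real_distribution Q"
  shows "bdd_above ((\<lambda>B. \<bar>measure P B - measure Q B\<bar>) ` sets borel)"
proof (rule bdd_aboveI2)
  fix B
  have "measure P B \<le> 1" "measure Q B \<le> 1"
    using assms by (auto simp: real_distribution_def prob_space.prob_le_1)
  then show "\<bar>measure P B - measure Q B\<bar> \<le> 1"
    unfolding abs_le_iff using measure_nonneg[of P B] measure_nonneg[of Q B] by (intro conjI; linarith)
qed

lemma tv_ge:
  assumes "real_distribution P" "real_distribution Q" "B \<in> sets borel"
  shows "\<bar>measure P B - measure Q B\<bar> \<le> tv_dist P Q"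
  unfolding tv_dist_def by (rule cSUP_upper[OF assms(3) tv_bdd[OF assms(1,2)]])

lemma tv_le:
  assumes "\<And>B. B \<in> sets borel \<Longrightarrow> \<bar>measure P B - measure Q B\<bar> \<le> s"
  shows "tv_dist P Q \<le> s"
  unfolding tv_dist_def by (rule cSUP_least) (use assms in auto)

lemma tv_nonneg:
  assumes "real_distribution P" "real_distribution Q"
  shows "0 \<le> tv_dist P Q"
  using tv_ge[OF assms, of "{}"] by simp

lemma tv_le1:
  assumes "real_distribution P" "real_distribution Q"
  shows "tv_dist P Q \<le> 1"
proof (rule tv_le)
  fix B
  have "measure P B \<le> 1" "measure Q B \<le> 1"
    using assms by (auto simp: real_distribution_def prob_space.prob_le_1)
  then show "\<bar>measure P B - measure Q B\<bar> \<le> 1"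
    unfolding abs_le_iff using measure_nonneg[of P B] measure_nonneg[of Q B] by (intro conjI; linarith)
qed

lemma cdf_gauss01: "cdf (gauss 0 1) = Phi"
  by (simp add: Phi_def[abs_def])

lemma S_set_ne: "{tv_dist A (gauss mu nu) | A. real_distribution A \<and> (\<forall>x. Phi x \<le> cdf A x)} \<noteq> {}"
  using real_distribution_gauss[of 1 0] cdf_gauss01 by auto

lemma S_ge:
  assumes "\<And>A. real_distribution A \<Longrightarrow> (\<forall>x. Phi x \<le> cdf A x) \<Longrightarrow> c \<le> tv_dist A (gauss m v)"
  shows "c \<le> S v m"
  unfolding S_def by (rule cInf_greatest[OF S_set_ne]) (use assms in auto)

lemma S_le:
  assumes "v \<ge> 0" "real_distribution A" "\<And>x. Phi x \<le> cdf A x"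
  shows "S v m \<le> tv_dist A (gauss m v)"
  unfolding S_def
proof (rule cInf_lower)
  show "bdd_below {tv_dist A (gauss m v) |A. real_distribution A \<and> (\<forall>x. Phi x \<le> cdf A x)}"
    by (rule bdd_belowI[of _ 0]) (use tv_nonneg real_distribution_gauss[OF assms(1)] in auto)
qed (use assms in auto)

lemma S_nonneg: assumes "v \<ge> 0" shows "0 \<le> S v m"
  by (rule S_ge) (use tv_nonneg real_distribution_gauss[OF assms] in auto)

lemma S_le1: assumes "v \<ge> 0" shows "S v m \<le> 1"
proof -
  have "S v m \<le> tv_dist (gauss 0 1) (gauss m v)"
    using S_le[OF assms real_distribution_gauss[of 1 0], of m] cdf_gauss01 by simp
  moreover have "tv_dist (gauss 0 1) (gauss m v) \<le> 1"
    using tv_le1[OF real_distribution_gauss[of 1 0] real_distribution_gauss[OF assms]] by simp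
  ultimately show ?thesis by linarith
qed

lemma S_lower:
  assumes "v \<ge> 0" shows "Phi t - cdf (gauss m v) t \<le> S v m"
proof (rule S_ge)
  fix A assume A: "real_distribution A" "\<forall>x. Phi x \<le> cdf A x"
  have "\<bar>measure A {..t} - measure (gauss m v) {..t}\<bar> \<le> tv_dist A (gauss m v)"
    by (rule tv_ge[OF A(1) real_distribution_gauss[OF assms]]) simp
  then show "Phi t - cdf (gauss m v) t \<le> tv_dist A (gauss m v)"
    using A(2)[rule_format, of t] by (simp add: cdf_def)
qed

lemma S_lower_pos:
  assumes "v > 0" shows "Phi t - Phi ((t - m) / sqrt v) \<le> S v m"
  using S_lower[of v t m] cdf_gauss[OF assms] assms by simp


lemma nd_exp:
  assumes "v > 0"
  shows "normal_density m (sqrt v) t = exp (- (t - m)\<^sup>2 / (2 * v) - ln v / 2) / sqrt (2 * pi)"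
proof -
  have "sqrt v = exp (ln v / 2)" using assms
    by (simp add: exp_divide_power_eq ln_sqrt[symmetric] del: ln_sqrt)
  then have "sqrt (2 * pi * (sqrt v)\<^sup>2) = sqrt (2 * pi) * exp (ln v / 2)"
    using assms by (simp add: real_sqrt_mult)
  moreover have "(sqrt v)\<^sup>2 = v" using assms by simp
  ultimately have "normal_density m (sqrt v) t = exp (- (t - m)\<^sup>2 / (2 * v)) / exp (ln v / 2) / sqrt (2 * pi)"
    unfolding normal_density_def by simp
  then show ?thesis unfolding exp_diff .
qed

lemma nd01_exp: "normal_density 0 1 t = exp (- t\<^sup>2 / 2) / sqrt (2 * pi)"
  by (simp add: normal_density_def)

lemma nd_le_nd01:
  assumes "v > 0"
  shows "normal_density m (sqrt v) t \<le> normal_density 0 1 t \<longleftrightarrow> 0 \<le> (t - m)\<^sup>2 + v * ln v - v * t\<^sup>2"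
proof -
  have "normal_density m (sqrt v) t \<le> normal_density 0 1 t \<longleftrightarrow>
        - (t - m)\<^sup>2 / (2 * v) - ln v / 2 \<le> - t\<^sup>2 / 2"
    by (simp add: nd_exp[OF assms] nd01_exp divide_right_mono divide_le_cancel)
  also have "\<dots> \<longleftrightarrow> 0 \<le> ((t - m)\<^sup>2 + v * ln v - v * t\<^sup>2) / (2 * v)"
  proof -
    have "- t\<^sup>2 / 2 - (- (t - m)\<^sup>2 / (2 * v) - ln v / 2) = ((t - m)\<^sup>2 + v * ln v - v * t\<^sup>2) / (2 * v)"
      using assms by (simp add: field_simps)
    then show ?thesis by linarith
  qed
  also have "\<dots> \<longleftrightarrow> 0 \<le> (t - m)\<^sup>2 + v * ln v - v * t\<^sup>2"
    using assms by (simp add: zero_le_divide_iff)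
  finally show ?thesis .
qed

lemma nd01_le_nd:
  assumes "v > 0"
  shows "normal_density 0 1 t \<le> normal_density m (sqrt v) t \<longleftrightarrow> (t - m)\<^sup>2 + v * ln v - v * t\<^sup>2 \<le> 0"
proof -
  have "normal_density 0 1 t \<le> normal_density m (sqrt v) t \<longleftrightarrow>
        - t\<^sup>2 / 2 \<le> - (t - m)\<^sup>2 / (2 * v) - ln v / 2"
    by (simp add: nd_exp[OF assms] nd01_exp divide_right_mono divide_le_cancel)
  also have "\<dots> \<longleftrightarrow> ((t - m)\<^sup>2 + v * ln v - v * t\<^sup>2) / (2 * v) \<le> 0"
  proof -
    have "- t\<^sup>2 / 2 - (- (t - m)\<^sup>2 / (2 * v) - ln v / 2) = ((t - m)\<^sup>2 + v * ln v - v * t\<^sup>2) / (2 * v)"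
      using assms by (simp add: field_simps)
    then show ?thesis by linarith
  qed
  also have "\<dots> \<longleftrightarrow> (t - m)\<^sup>2 + v * ln v - v * t\<^sup>2 \<le> 0"
    using assms by (simp add: divide_le_0_iff)
  finally show ?thesis .
qed

lemma D_nonneg: fixes v m :: real assumes "v > 0" shows "0 \<le> m\<^sup>2 + (v - 1) * ln v"
proof -
  have "0 \<le> (v - 1) * ln v"
  proof (cases "v \<ge> 1")
    case True
    have "0 \<le> ln v" using ln_ge_zero_iff[of v] assms True by simp
    then show ?thesis using True by (intro mult_nonneg_nonneg) auto
  next
    case False
    have "ln v < 0" using False assms by simp
    then show ?thesis using False by (intro mult_nonpos_nonpos) auto
  qed
  moreover have "0 \<le> m\<^sup>2" by simp
  ultimately show ?thesis by linarith
qed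

lemma quad_aux:
  fixes k a m t :: real assumes "k \<noteq> 0"
  shows "k * (t - (m - a) / k) * (t - (m + a) / k) * k = (k * t - m)\<^sup>2 - a\<^sup>2"
proof -
  have 1: "t - (m - a) / k = (k * t - m + a) / k" using assms by (simp add: field_simps)
  have 2: "t - (m + a) / k = (k * t - m - a) / k" using assms by (simp add: field_simps)
  have "k * ((k * t - m + a) / k) * ((k * t - m - a) / k) * k = (k * t - m + a) * (k * t - m - a)"
    using assms by simp
  also have "\<dots> = (k * t - m)\<^sup>2 - a\<^sup>2" by (simp add: power2_eq_square algebra_simps)
  finally show ?thesis unfolding 1 2 .
qed

lemma quad_factor:
  fixes v m t D :: real
  assumes "v > 0" "v \<noteq> 1" and D_def: "D = m\<^sup>2 + (v - 1) * ln v"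
  shows "(t - m)\<^sup>2 + v * ln v - v * t\<^sup>2 =
    (1 - v) * (t - (m - sqrt v * sqrt D) / (1 - v)) * (t - (m + sqrt v * sqrt D) / (1 - v))"
proof -
  have D0: "0 \<le> D" unfolding D_def by (rule D_nonneg[OF assms(1)])
  have a2: "(sqrt v * sqrt D)\<^sup>2 = v * D" using D0 assms(1)
    by (simp add: power_mult_distrib)
  have ne: "1 - v \<noteq> 0" using assms by simp
  have "(1 - v) * (t - (m - sqrt v * sqrt D) / (1 - v)) * (t - (m + sqrt v * sqrt D) / (1 - v)) * (1 - v)
     = ((1 - v) * t - m)\<^sup>2 - (sqrt v * sqrt D)\<^sup>2"
    by (rule quad_aux[OF ne])
  also have "\<dots> = ((t - m)\<^sup>2 + v * ln v - v * t\<^sup>2) * (1 - v)"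
    unfolding a2 unfolding D_def by (simp add: power2_eq_square algebra_simps)
  finally show ?thesis using ne by simp
qed


lemma emeasure_gauss: assumes "v \<ge> 0" shows "emeasure (gauss m v) B = ennreal (measure (gauss m v) B)"
proof -
  interpret real_distribution "gauss m v" using real_distribution_gauss[OF assms] .
  show ?thesis by (rule emeasure_eq_measure)
qed

lemma gauss_le_on:
  assumes "u > 0" "w > 0" "B \<in> sets borel"
    and le: "\<And>x. x \<in> B \<Longrightarrow> normal_density a (sqrt u) x \<le> normal_density b (sqrt w) x"
  shows "measure (gauss a u) B \<le> measure (gauss b w) B"
proof -
  have "emeasure (gauss a u) B = (\<integral>\<^sup>+ x. ennreal (normal_density a (sqrt u) x) * indicator B x \<partial>lborel)"
    using assms by (simp add: gauss_density emeasure_density)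
  also have "\<dots> \<le> (\<integral>\<^sup>+ x. ennreal (normal_density b (sqrt w) x) * indicator B x \<partial>lborel)"
    by (intro nn_integral_mono) (auto split: split_indicator intro!: ennreal_leI le)
  also have "\<dots> = emeasure (gauss b w) B"
    using assms by (simp add: gauss_density emeasure_density)
  finally show ?thesis
    using assms by (simp add: emeasure_gauss)
qed

lemma tv_split:
  assumes P: "real_distribution P" and Q: "real_distribution Q" and E: "E \<in> sets borel"
    and h1: "\<And>B. B \<in> sets borel \<Longrightarrow> B \<subseteq> E \<Longrightarrow> measure Q B \<le> measure P B"
    and h2: "\<And>B. B \<in> sets borel \<Longrightarrow> B \<inter> E = {} \<Longrightarrow> measure P B \<le> measure Q B"
  shows "tv_dist P Q \<le> measure P E - measure Q E"
proof (rule tv_le)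
  fix B :: "real set" assume B: "B \<in> sets borel"
  interpret p: real_distribution P by (rule P)
  interpret q: real_distribution Q by (rule Q)
  have u1: "B = (B \<inter> E) \<union> (B - E)" by auto
  have u2: "E = (B \<inter> E) \<union> (E - B)" by auto
  have u3: "UNIV - E = (B - E) \<union> ((UNIV - E) - B)" by auto
  have s: "B \<inter> E \<in> sets borel" "B - E \<in> sets borel" "E - B \<in> sets borel" "(UNIV - E) - B \<in> sets borel"
    "UNIV - E \<in> sets borel"
    using B E by auto
  have pB: "measure P B = measure P (B \<inter> E) + measure P (B - E)"
    using p.finite_measure_Union[of "B \<inter> E" "B - E"] s by (subst u1) auto
  have qB: "measure Q B = measure Q (B \<inter> E) + measure Q (B - E)"
    using q.finite_measure_Union[of "B \<inter> E" "B - E"] s by (subst u1) auto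
  have pE: "measure P E = measure P (B \<inter> E) + measure P (E - B)"
    using p.finite_measure_Union[of "B \<inter> E" "E - B"] s by (subst u2) auto
  have qE: "measure Q E = measure Q (B \<inter> E) + measure Q (E - B)"
    using q.finite_measure_Union[of "B \<inter> E" "E - B"] s by (subst u2) auto
  have pC: "measure P (UNIV - E) = measure P (B - E) + measure P ((UNIV - E) - B)"
    using p.finite_measure_Union[of "B - E" "(UNIV - E) - B"] s by (subst u3) auto
  have qC: "measure Q (UNIV - E) = measure Q (B - E) + measure Q ((UNIV - E) - B)"
    using q.finite_measure_Union[of "B - E" "(UNIV - E) - B"] s by (subst u3) auto
  have pc: "measure P (UNIV - E) = 1 - measure P E" using p.prob_compl[of E] E by simp
  have qc: "measure Q (UNIV - E) = 1 - measure Q E" using q.prob_compl[of E] E by simp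
  have i1: "measure Q (B \<inter> E) \<le> measure P (B \<inter> E)" using s by (intro h1) auto
  have i2: "measure Q (E - B) \<le> measure P (E - B)" using s by (intro h1) auto
  have i3: "measure P (B - E) \<le> measure Q (B - E)" using s by (intro h2) auto
  have i4: "measure P ((UNIV - E) - B) \<le> measure Q ((UNIV - E) - B)" using s by (intro h2) auto
  show "\<bar>measure P B - measure Q B\<bar> \<le> measure P E - measure Q E"
    unfolding abs_le_iff using pB qB pE qE pC qC pc qc i1 i2 i3 i4 by (intro conjI; linarith)
qed

definition mixg :: "real \<Rightarrow> real \<Rightarrow> real \<Rightarrow> real \<Rightarrow> real \<Rightarrow> real measure" where
  "mixg c a u b w = density lborel (\<lambda>x. ennreal (if x \<le> c then normal_density a (sqrt u) x else normal_density b (sqrt w) x))"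

lemma sets_mixg[simp]: "sets (mixg c a u b w) = sets borel"
  by (simp add: mixg_def)

lemma space_mixg[simp]: "space (mixg c a u b w) = UNIV"
  using sets_eq_imp_space_eq[OF sets_mixg[of c a u b w]] by simp

lemma emeasure_mixg:
  assumes "u > 0" "w > 0" "B \<in> sets borel"
  shows "emeasure (mixg c a u b w) B = emeasure (gauss a u) (B \<inter> {..c}) + emeasure (gauss b w) (B \<inter> {c<..})"
proof -
  have "emeasure (mixg c a u b w) B = (\<integral>\<^sup>+ x. ennreal (if x \<le> c then normal_density a (sqrt u) x else normal_density b (sqrt w) x) * indicator B x \<partial>lborel)"
    using assms by (simp add: mixg_def emeasure_density)
  also have "\<dots> = (\<integral>\<^sup>+ x. ennreal (normal_density a (sqrt u) x) * indicator (B \<inter> {..c}) x +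
                          ennreal (normal_density b (sqrt w) x) * indicator (B \<inter> {c<..}) x \<partial>lborel)"
    by (intro nn_integral_cong) (auto split: split_indicator)
  also have "\<dots> = (\<integral>\<^sup>+ x. ennreal (normal_density a (sqrt u) x) * indicator (B \<inter> {..c}) x \<partial>lborel) +
                  (\<integral>\<^sup>+ x. ennreal (normal_density b (sqrt w) x) * indicator (B \<inter> {c<..}) x \<partial>lborel)"
    using assms by (intro nn_integral_add) auto
  also have "\<dots> = emeasure (gauss a u) (B \<inter> {..c}) + emeasure (gauss b w) (B \<inter> {c<..})"
    using assms by (simp add: gauss_density emeasure_density)
  finally show ?thesis .
qed

lemma measure_mixg:
  assumes "u > 0" "w > 0" "B \<in> sets borel"
  shows "measure (mixg c a u b w) B = measure (gauss a u) (B \<inter> {..c}) + measure (gauss b w) (B \<inter> {c<..})"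
proof -
  have "emeasure (mixg c a u b w) B = ennreal (measure (gauss a u) (B \<inter> {..c}) + measure (gauss b w) (B \<inter> {c<..}))"
    using assms by (subst ennreal_plus) (simp_all add: emeasure_mixg emeasure_gauss)
  then show ?thesis unfolding measure_def[of "mixg c a u b w"]
    by (simp only: enn2real_ennreal add_nonneg_nonneg measure_nonneg)
qed

lemma real_distribution_mixg:
  assumes "u > 0" "w > 0" "cdf (gauss a u) c = cdf (gauss b w) c"
  shows "real_distribution (mixg c a u b w)"
proof -
  have "emeasure (mixg c a u b w) UNIV = emeasure (gauss a u) {..c} + emeasure (gauss b w) {c<..}"
    using emeasure_mixg[OF assms(1,2), where B=UNIV and c=c and a=a and b=b] by simp
  also have "\<dots> = ennreal (cdf (gauss a u) c) + ennreal (1 - cdf (gauss b w) c)"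
    using assms by (simp add: emeasure_gauss measure_Ioi_gauss cdf_def)
  also have "\<dots> = 1"
  proof -
    have "cdf (gauss b w) c \<le> 1" "0 \<le> cdf (gauss b w) c"
      using real_distribution.cdf_bounded_prob[OF real_distribution_gauss[of w b]] assms(2)
      finite_borel_measure.cdf_nonneg[OF real_distribution.finite_borel_measure_M[OF real_distribution_gauss[of w b]]]
      by auto
    then show ?thesis using assms(3) by (subst ennreal_plus[symmetric]) auto
  qed
  finally have "prob_space (mixg c a u b w)" by (intro prob_spaceI) simp
  then show ?thesis by (simp add: real_distribution_def real_distribution_axioms_def)
qed

lemma cdf_mixg_le:
  assumes "u > 0" "w > 0" "t \<le> c"
  shows "cdf (mixg c a u b w) t = cdf (gauss a u) t"
proof -
  have "{..t} \<inter> {..c} = {..t}" "{..t} \<inter> {c<..} = {}" using assms by auto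
  then show ?thesis using measure_mixg[OF assms(1,2), where B="{..t}" and c=c and a=a and b=b] by (simp add: cdf_def)
qed

lemma cdf_mixg_ge:
  assumes "u > 0" "w > 0" "c < t"
  shows "cdf (mixg c a u b w) t = cdf (gauss a u) c + (cdf (gauss b w) t - cdf (gauss b w) c)"
proof -
  have "{..t} \<inter> {..c} = {..c}" "{..t} \<inter> {c<..} = {c<..t}" using assms by auto
  moreover have "measure (gauss b w) {c<..t} = cdf (gauss b w) t - cdf (gauss b w) c"
    using finite_borel_measure.cdf_diff_eq[OF real_distribution.finite_borel_measure_M[OF real_distribution_gauss[of w b]] assms(3)] assms(2)
    by simp
  ultimately show ?thesis using measure_mixg[OF assms(1,2), where B="{..t}" and c=c and a=a and b=b] by (simp add: cdf_def)
qed


lemma measure_split_at: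
  assumes "real_distribution M" "B \<in> sets borel"
  shows "measure M B = measure M (B \<inter> {..c}) + measure M (B \<inter> {c<..})"
proof -
  interpret real_distribution M by fact
  have e: "(B \<inter> {..c}) \<union> (B \<inter> {c<..}) = B" by auto
  have "measure M ((B \<inter> {..c}) \<union> (B \<inter> {c<..})) = measure M (B \<inter> {..c}) + measure M (B \<inter> {c<..})"
    by (rule finite_measure_Union) (use assms(2) in auto)
  then show ?thesis unfolding e .
qed

lemma Q_le_N:
  assumes "v > 0" "B \<in> sets borel" "\<And>x. x \<in> B \<Longrightarrow> normal_density m (sqrt v) x \<le> normal_density 0 1 x"
  shows "measure (gauss m v) B \<le> measure (gauss 0 1) B"
  using gauss_le_on[of v 1 B m 0] assms by simp

lemma N_le_Q:
  assumes "v > 0" "B \<in> sets borel" "\<And>x. x \<in> B \<Longrightarrow> normal_density 0 1 x \<le> normal_density m (sqrt v) x"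
  shows "measure (gauss 0 1) B \<le> measure (gauss m v) B"
  using gauss_le_on[of 1 v B 0 m] assms by simp

lemma Phi_eq_measure: "Phi t = measure (gauss 0 1) {..t}"
  by (simp add: Phi_def cdf_def)

lemma cdfN_diff: "a < b \<Longrightarrow> measure (gauss 0 1) {a<..b} = Phi b - Phi a"
  using finite_borel_measure.cdf_diff_eq[OF real_distribution.finite_borel_measure_M[OF real_distribution_gauss[of 1 0]]]
  by (simp add: Phi_def)

lemma cdfQ_diff: "v > 0 \<Longrightarrow> a < b \<Longrightarrow> measure (gauss m v) {a<..b} = cdf (gauss m v) b - cdf (gauss m v) a"
  using finite_borel_measure.cdf_diff_eq[OF real_distribution.finite_borel_measure_M[OF real_distribution_gauss[of v m]]]
  by simp

lemma N_Ioi: "measure (gauss 0 1) {t<..} = 1 - Phi t"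
  using measure_Ioi_gauss[of 1 0 t] by (simp add: Phi_def)

lemma continuous_on_GmPhi: "v > 0 \<Longrightarrow> continuous_on X (\<lambda>t. cdf (gauss m v) t - Phi t)"
  by (intro continuous_at_imp_continuous_on ballI isCont_diff isCont_cdf_gauss isCont_Phi)


lemma x1_shift:
  fixes v m D :: real assumes "v > 0" "v \<noteq> 1"
  shows "((m - sqrt v * sqrt D) / (1 - v) - m) / sqrt v = (sqrt v * m - sqrt D) / (1 - v)"
proof -
  have ne: "1 - v \<noteq> 0" using assms by simp
  have sv: "sqrt v * sqrt v = v" using assms by simp
  have sp: "sqrt v > 0" using assms by simp
  have "(m - sqrt v * sqrt D) / (1 - v) - m = (v * m - sqrt v * sqrt D) / (1 - v)"
    using ne by (simp add: field_simps)
  also have "v * m - sqrt v * sqrt D = sqrt v * (sqrt v * m - sqrt D)"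
    using assms(1) by (simp add: right_diff_distrib mult.assoc[symmetric] sv)
  also have "sqrt v * (sqrt v * m - sqrt D) / (1 - v) = sqrt v * ((sqrt v * m - sqrt D) / (1 - v))"
    by simp
  finally show ?thesis using sp by simp
qed

lemma S_formula_lt1:
  fixes v m :: real assumes v0: "0 < v" and v1: "v < 1"
  shows "S v m = Phi ((m - sqrt v * sqrt (m\<^sup>2 + (v - 1) * ln v)) / (1 - v))
               - Phi ((sqrt v * m - sqrt (m\<^sup>2 + (v - 1) * ln v)) / (1 - v))"
proof -
  define D where "D = m\<^sup>2 + (v - 1) * ln v"
  define x1 where "x1 = (m - sqrt v * sqrt D) / (1 - v)"
  define x2 where "x2 = (m + sqrt v * sqrt D) / (1 - v)"
  define G where "G = cdf (gauss m v)"
  define N where "N = gauss 0 1"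
  define Q where "Q = gauss m v"
  have vne: "v \<noteq> 1" using v1 by simp
  have hx: "(x1 - m) / sqrt v = (sqrt v * m - sqrt D) / (1 - v)"
    unfolding x1_def by (rule x1_shift[OF v0 vne])
  have fac: "(t - m)\<^sup>2 + v * ln v - v * t\<^sup>2 = (1 - v) * (t - x1) * (t - x2)" for t
    unfolding x1_def x2_def by (rule quad_factor[OF v0 vne D_def])
  have D0: "0 \<le> D" using D_nonneg[OF v0, of m] by (simp add: D_def)
  have x12: "x1 \<le> x2"
    unfolding x1_def x2_def using v0 v1 D0 by (intro divide_right_mono) auto
  have F1: "normal_density m (sqrt v) t \<le> normal_density 0 1 t" if "t \<le> x1" for t
  proof -
    have "0 \<le> ((1 - v) * (t - x1)) * (t - x2)"
      using that x12 v1 by (intro mult_nonpos_nonpos mult_nonneg_nonpos) auto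
    then show ?thesis by (simp only: nd_le_nd01[OF v0] fac)
  qed
  have F2: "normal_density 0 1 t \<le> normal_density m (sqrt v) t" if "x1 \<le> t" "t \<le> x2" for t
  proof -
    have "((1 - v) * (t - x1)) * (t - x2) \<le> 0"
      using that v1 by (intro mult_nonneg_nonpos mult_nonneg_nonneg) auto
    then show ?thesis by (simp only: nd01_le_nd[OF v0] fac)
  qed
  have F3: "normal_density m (sqrt v) t \<le> normal_density 0 1 t" if "x2 \<le> t" for t
  proof -
    have "0 \<le> ((1 - v) * (t - x1)) * (t - x2)"
      using that x12 v1 by (intro mult_nonneg_nonneg) auto
    then show ?thesis by (simp only: nd_le_nd01[OF v0] fac)
  qed
  have e1: "G x1 \<le> Phi x1"
    using Q_le_N[OF v0, of "{..x1}" m] F1 by (simp add: G_def cdf_def Phi_eq_measure)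
  have e2: "Phi x2 \<le> G x2"
  proof -
    have "measure (gauss m v) {x2<..} \<le> measure (gauss 0 1) {x2<..}"
      using Q_le_N[OF v0, of "{x2<..}" m] F3 by simp
    then show ?thesis using measure_Ioi_gauss[of v m x2] v0 N_Ioi[of x2] by (simp add: G_def)
  qed
  obtain c where c: "x1 \<le> c" "c \<le> x2" "G c - Phi c = 0"
    using IVT'[of "\<lambda>t. G t - Phi t" x1 0 x2] e1 e2 x12 continuous_on_GmPhi[OF v0] by (auto simp: G_def)
  have GPc: "cdf (gauss 0 1) c = cdf (gauss m v) c" using c(3) by (simp add: G_def Phi_def)
  define A where "A = mixg c 0 1 m v"
  have A: "real_distribution A" unfolding A_def by (rule real_distribution_mixg) (use v0 GPc in auto)
  have cdfA: "Phi t \<le> cdf A t" for t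
  proof (cases "t \<le> c")
    case True
    then show ?thesis using cdf_mixg_le[of 1 v t c 0 m] v0 by (simp add: A_def Phi_def)
  next
    case False
    then have "cdf A t = G t" using cdf_mixg_ge[of 1 v c t 0 m] v0 c(3) by (simp add: A_def G_def Phi_def)
    moreover have "Phi t \<le> G t"
    proof (cases "t \<le> x2")
      case True
      have "measure (gauss 0 1) {c<..t} \<le> measure (gauss m v) {c<..t}"
        using N_le_Q[OF v0, of "{c<..t}" m] F2 c True by auto
      then show ?thesis using cdfN_diff[of c t] cdfQ_diff[OF v0, of c t m] False c(3) by (simp add: G_def)
    next
      case False
      have "measure (gauss m v) {t<..} \<le> measure (gauss 0 1) {t<..}"
        using Q_le_N[OF v0, of "{t<..}" m] F3 False by auto
      then show ?thesis using measure_Ioi_gauss[of v m t] v0 N_Ioi[of t] by (simp add: G_def)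
    qed
    ultimately show ?thesis by simp
  qed
  have mA: "measure A B = measure (gauss 0 1) (B \<inter> {..c}) + measure (gauss m v) (B \<inter> {c<..})"
    if "B \<in> sets borel" for B
    unfolding A_def using measure_mixg[of 1 v B c 0 m] v0 that by simp
  have RQ: "real_distribution (gauss m v)" using real_distribution_gauss v0 by simp
  have tv: "tv_dist A (gauss m v) \<le> measure A {..x1} - measure (gauss m v) {..x1}"
  proof (rule tv_split[OF A RQ])
    fix B :: "real set" assume B: "B \<in> sets borel" "B \<subseteq> {..x1}"
    have "B \<inter> {..c} = B" "B \<inter> {c<..} = {}" using B c by auto
    then have "measure A B = measure (gauss 0 1) B" using mA[OF B(1)] by simp
    moreover have "measure (gauss m v) B \<le> measure (gauss 0 1) B"
      using Q_le_N[OF v0 B(1)] F1 B(2) by auto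
    ultimately show "measure (gauss m v) B \<le> measure A B" by simp
  next
    fix B :: "real set" assume B: "B \<in> sets borel" "B \<inter> {..x1} = {}"
    have "measure (gauss 0 1) (B \<inter> {..c}) \<le> measure (gauss m v) (B \<inter> {..c})"
    proof (rule N_le_Q[OF v0])
      fix x assume "x \<in> B \<inter> {..c}"
      then have "x1 \<le> x" "x \<le> x2" using B(2) c by auto
      then show "normal_density 0 1 x \<le> normal_density m (sqrt v) x" by (rule F2)
    qed (use B in auto)
    then show "measure A B \<le> measure (gauss m v) B"
      using mA[OF B(1)] measure_split_at[OF RQ B(1), of c] by simp
  qed simp
  have "{..x1} \<inter> {c<..} = {}" "{..x1} \<inter> {..c} = {..x1}" using c(1) by auto
  then have "measure A {..x1} = Phi x1"
    using mA[of "{..x1}"] by (simp add: Phi_eq_measure)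
  then have tv2: "tv_dist A (gauss m v) \<le> Phi x1 - G x1" using tv by (simp add: G_def cdf_def)
  have up: "S v m \<le> Phi x1 - G x1"
    using S_le[of v A m] v0 A cdfA tv2 by force
  have low: "Phi x1 - G x1 \<le> S v m"
    using S_lower[of v x1 m] v0 by (simp add: G_def)
  have "S v m = Phi x1 - G x1" using up low by simp
  also have "G x1 = Phi ((sqrt v * m - sqrt D) / (1 - v))"
    using cdf_gauss[OF v0, of m x1] hx by (simp add: G_def)
  finally show ?thesis by (simp add: x1_def D_def)
qed


lemma S_formula_gt1:
  fixes v m :: real assumes v0: "0 < v" and v1: "v > 1"
  shows "S v m = Phi ((m - sqrt v * sqrt (m\<^sup>2 + (v - 1) * ln v)) / (1 - v))
               - Phi ((sqrt v * m - sqrt (m\<^sup>2 + (v - 1) * ln v)) / (1 - v))"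
proof -
  define D where "D = m\<^sup>2 + (v - 1) * ln v"
  define x1 where "x1 = (m - sqrt v * sqrt D) / (1 - v)"
  define x2 where "x2 = (m + sqrt v * sqrt D) / (1 - v)"
  define G where "G = cdf (gauss m v)"
  have vne: "v \<noteq> 1" using v1 by simp
  have hx: "(x1 - m) / sqrt v = (sqrt v * m - sqrt D) / (1 - v)"
    unfolding x1_def by (rule x1_shift[OF v0 vne])
  have fac: "(t - m)\<^sup>2 + v * ln v - v * t\<^sup>2 = (1 - v) * (t - x1) * (t - x2)" for t
    unfolding x1_def x2_def by (rule quad_factor[OF v0 vne D_def])
  have D0: "0 \<le> D" using D_nonneg[OF v0, of m] by (simp add: D_def)
  have x12: "x2 \<le> x1"
    unfolding x1_def x2_def using v0 v1 D0 by (intro divide_right_mono_neg) auto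
  have F1: "normal_density 0 1 t \<le> normal_density m (sqrt v) t" if "t \<le> x2" for t
  proof -
    have "((1 - v) * (t - x1)) * (t - x2) \<le> 0"
      using that x12 v1 by (intro mult_nonneg_nonpos mult_nonpos_nonpos) auto
    then show ?thesis by (simp only: nd01_le_nd[OF v0] fac)
  qed
  have F2: "normal_density m (sqrt v) t \<le> normal_density 0 1 t" if "x2 \<le> t" "t \<le> x1" for t
  proof -
    have "0 \<le> ((1 - v) * (t - x1)) * (t - x2)"
      using that v1 by (intro mult_nonneg_nonneg mult_nonpos_nonpos) auto
    then show ?thesis by (simp only: nd_le_nd01[OF v0] fac)
  qed
  have F3: "normal_density 0 1 t \<le> normal_density m (sqrt v) t" if "x1 \<le> t" for t
  proof -
    have "((1 - v) * (t - x1)) * (t - x2) \<le> 0"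
      using that x12 v1 by (intro mult_nonpos_nonneg) auto
    then show ?thesis by (simp only: nd01_le_nd[OF v0] fac)
  qed
  have e1: "Phi x2 \<le> G x2"
    using N_le_Q[OF v0, of "{..x2}" m] F1 by (simp add: G_def cdf_def Phi_eq_measure)
  have e2: "G x1 \<le> Phi x1"
  proof -
    have "measure (gauss 0 1) {x1<..} \<le> measure (gauss m v) {x1<..}"
      using N_le_Q[OF v0, of "{x1<..}" m] F3 by simp
    then show ?thesis using measure_Ioi_gauss[of v m x1] v0 N_Ioi[of x1] by (simp add: G_def)
  qed
  obtain c where c: "x2 \<le> c" "c \<le> x1" "G c - Phi c = 0"
    using IVT2'[of "\<lambda>t. G t - Phi t" x1 0 x2] e1 e2 x12 continuous_on_GmPhi[OF v0] by (auto simp: G_def)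
  have GPc: "cdf (gauss m v) c = cdf (gauss 0 1) c" using c(3) by (simp add: G_def Phi_def)
  define A where "A = mixg c m v 0 1"
  have A: "real_distribution A" unfolding A_def by (rule real_distribution_mixg) (use v0 GPc in auto)
  have cdfA: "Phi t \<le> cdf A t" for t
  proof (cases "t \<le> c")
    case True
    then have "cdf A t = G t" using cdf_mixg_le[of v 1 t c m 0] v0 by (simp add: A_def G_def)
    moreover have "Phi t \<le> G t"
    proof (cases "t \<le> x2")
      case True
      then show ?thesis
        using N_le_Q[OF v0, of "{..t}" m] F1 by (simp add: G_def cdf_def Phi_eq_measure)
    next
      case False
      show ?thesis
      proof (cases "t = c")
        case True then show ?thesis using c(3) by simp
      next
        case tc: False
        then have tc': "t < c" using \<open>t \<le> c\<close> by simp
        have "measure (gauss m v) {t<..c} \<le> measure (gauss 0 1) {t<..c}"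
          using Q_le_N[OF v0, of "{t<..c}" m] F2 c False by auto
        then show ?thesis using cdfN_diff[OF tc'] cdfQ_diff[OF v0 tc', of m] c(3) by (simp add: G_def)
      qed
    qed
    ultimately show ?thesis by simp
  next
    case False
    then show ?thesis using cdf_mixg_ge[of v 1 c t m 0] v0 c(3) by (simp add: A_def G_def Phi_def)
  qed
  have mA: "measure A B = measure (gauss m v) (B \<inter> {..c}) + measure (gauss 0 1) (B \<inter> {c<..})"
    if "B \<in> sets borel" for B
    unfolding A_def using measure_mixg[of v 1 B c m 0] v0 that by simp
  have RQ: "real_distribution (gauss m v)" using real_distribution_gauss v0 by simp
  have tv: "tv_dist A (gauss m v) \<le> measure A {..x1} - measure (gauss m v) {..x1}"
  proof (rule tv_split[OF A RQ])
    fix B :: "real set" assume B: "B \<in> sets borel" "B \<subseteq> {..x1}"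
    have "measure (gauss m v) (B \<inter> {c<..}) \<le> measure (gauss 0 1) (B \<inter> {c<..})"
    proof (rule Q_le_N[OF v0])
      fix x assume "x \<in> B \<inter> {c<..}"
      then have "x2 \<le> x" "x \<le> x1" using B(2) c by auto
      then show "normal_density m (sqrt v) x \<le> normal_density 0 1 x" by (rule F2)
    qed (use B in auto)
    then show "measure (gauss m v) B \<le> measure A B"
      using mA[OF B(1)] measure_split_at[OF RQ B(1), of c] by simp
  next
    fix B :: "real set" assume B: "B \<in> sets borel" "B \<inter> {..x1} = {}"
    have "B \<inter> {..c} = {}" "B \<inter> {c<..} = B" using B c by auto
    then have "measure A B = measure (gauss 0 1) B" using mA[OF B(1)] by simp
    moreover have "measure (gauss 0 1) B \<le> measure (gauss m v) B"
    proof (rule N_le_Q[OF v0 B(1)])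
      fix x assume "x \<in> B" then have "x1 \<le> x" using B(2) by auto
      then show "normal_density 0 1 x \<le> normal_density m (sqrt v) x" by (rule F3)
    qed
    ultimately show "measure A B \<le> measure (gauss m v) B" by simp
  qed simp
  have "measure A {..x1} = Phi x1"
  proof (cases "c < x1")
    case True
    then show ?thesis using cdf_mixg_ge[of v 1 c x1 m 0] v0 c(3) by (simp add: A_def G_def Phi_def cdf_def)
  next
    case False
    then have "c = x1" using c(2) by simp
    then show ?thesis using cdf_mixg_le[of v 1 x1 c m 0] v0 c(3) by (simp add: A_def G_def Phi_def cdf_def)
  qed
  then have tv2: "tv_dist A (gauss m v) \<le> Phi x1 - G x1" using tv by (simp add: G_def cdf_def)
  have up: "S v m \<le> Phi x1 - G x1"
    using S_le[of v A m] v0 A cdfA tv2 by force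
  have low: "Phi x1 - G x1 \<le> S v m"
    using S_lower[of v x1 m] v0 by (simp add: G_def)
  have "S v m = Phi x1 - G x1" using up low by simp
  also have "G x1 = Phi ((sqrt v * m - sqrt D) / (1 - v))"
    using cdf_gauss[OF v0, of m x1] hx by (simp add: G_def)
  finally show ?thesis by (simp add: x1_def D_def)
qed


lemma S_formula:
  fixes v m :: real assumes "0 < v" "v \<noteq> 1"
  shows "S v m = Phi ((m - sqrt v * sqrt (m\<^sup>2 + (v - 1) * ln v)) / (1 - v))
               - Phi ((sqrt v * m - sqrt (m\<^sup>2 + (v - 1) * ln v)) / (1 - v))"
proof (cases "v < 1")
  case True then show ?thesis using S_formula_lt1 assms by blast
next
  case False then have "v > 1" using assms by simp
  then show ?thesis using S_formula_gt1 assms by blast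
qed

lemma S_attained_ne1:
  fixes v m :: real assumes "0 < v" "v \<noteq> 1"
  shows "\<exists>t. S v m = Phi t - Phi ((t - m) / sqrt v)"
proof -
  define D where "D = m\<^sup>2 + (v - 1) * ln v"
  have "S v m = Phi ((m - sqrt v * sqrt D) / (1 - v)) - Phi ((((m - sqrt v * sqrt D) / (1 - v)) - m) / sqrt v)"
    unfolding x1_shift[OF assms] D_def by (rule S_formula[OF assms])
  then show ?thesis by blast
qed

lemma nd1_le_nd01_iff:
  assumes "m > 0"
  shows "normal_density m 1 t \<le> normal_density 0 1 t \<longleftrightarrow> t \<le> m / 2"
proof -
  have "normal_density m (sqrt 1) t \<le> normal_density 0 1 t \<longleftrightarrow> 0 \<le> (t - m)\<^sup>2 + 1 * ln 1 - 1 * t\<^sup>2"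
    by (rule nd_le_nd01) simp
  also have "(t - m)\<^sup>2 + 1 * ln 1 - 1 * t\<^sup>2 = m * (m - 2 * t)" by (simp add: power2_eq_square algebra_simps)
  also have "0 \<le> m * (m - 2 * t) \<longleftrightarrow> t \<le> m / 2" using assms by (auto simp: zero_le_mult_iff)
  finally show ?thesis by simp
qed

lemma nd01_le_nd1_iff:
  assumes "m > 0"
  shows "normal_density 0 1 t \<le> normal_density m 1 t \<longleftrightarrow> m / 2 \<le> t"
proof -
  have "normal_density 0 1 t \<le> normal_density m (sqrt 1) t \<longleftrightarrow> (t - m)\<^sup>2 + 1 * ln 1 - 1 * t\<^sup>2 \<le> 0"
    by (rule nd01_le_nd) simp
  also have "(t - m)\<^sup>2 + 1 * ln 1 - 1 * t\<^sup>2 = m * (m - 2 * t)" by (simp add: power2_eq_square algebra_simps)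
  also have "m * (m - 2 * t) \<le> 0 \<longleftrightarrow> m / 2 \<le> t" using assms by (auto simp: mult_le_0_iff)
  finally show ?thesis by simp
qed

lemma S_one_pos:
  fixes m :: real assumes m: "m > 0"
  shows "S 1 m = 2 * Phi (m / 2) - 1"
proof -
  have R1: "real_distribution (gauss m 1)" "real_distribution (gauss 0 1)"
    using real_distribution_gauss by auto
  have eq: "Phi (m / 2) - Phi ((m / 2 - m) / sqrt 1) = 2 * Phi (m / 2) - 1"
  proof -
    have "(m / 2 - m) / sqrt 1 = - (m / 2)" by simp
    then show ?thesis using Phi_minus[of "m / 2"] by simp
  qed
  have tv: "tv_dist (gauss 0 1) (gauss m 1) \<le> measure (gauss 0 1) {..m/2} - measure (gauss m 1) {..m/2}"
  proof (rule tv_split[OF R1(2) R1(1)])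
    fix B :: "real set" assume B: "B \<in> sets borel" "B \<subseteq> {..m/2}"
    show "measure (gauss m 1) B \<le> measure (gauss 0 1) B"
      by (rule Q_le_N) (use B nd1_le_nd01_iff[OF m] in auto)
  next
    fix B :: "real set" assume B: "B \<in> sets borel" "B \<inter> {..m/2} = {}"
    show "measure (gauss 0 1) B \<le> measure (gauss m 1) B"
    proof (rule N_le_Q)
      fix x assume "x \<in> B" then have "m / 2 \<le> x" using B(2) by auto
      then show "normal_density 0 1 x \<le> normal_density m (sqrt 1) x" using nd01_le_nd1_iff[OF m] by simp
    qed (use B in auto)
  qed simp
  have "measure (gauss 0 1) {..m/2} - measure (gauss m 1) {..m/2} = Phi (m / 2) - Phi ((m / 2 - m) / sqrt 1)"
    using cdf_gauss[of 1 m "m/2"] by (simp add: Phi_eq_measure cdf_def)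
  then have up: "S 1 m \<le> 2 * Phi (m / 2) - 1"
    using S_le[of 1 "gauss 0 1" m] R1 cdf_gauss01 tv eq by force
  have low: "2 * Phi (m / 2) - 1 \<le> S 1 m"
    using S_lower_pos[of 1 "m/2" m] eq by simp
  show ?thesis using up low by simp
qed

lemma S_one_nonpos:
  fixes m :: real assumes m: "m \<le> 0"
  shows "S 1 m = 0"
proof -
  have R: "real_distribution (gauss m 1)" using real_distribution_gauss by auto
  have "Phi t \<le> cdf (gauss m 1) t" for t
    using cdf_gauss[of 1 m t] m by (simp add: Phi_le_iff)
  then have "S 1 m \<le> tv_dist (gauss m 1) (gauss m 1)" using S_le[of 1 "gauss m 1" m] R by simp
  also have "\<dots> \<le> 0" by (rule tv_le) simp
  finally show ?thesis using S_nonneg[of 1 m] by simp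
qed

lemma S_one: "S 1 m = max (2 * Phi (m / 2) - 1) 0"
proof (cases "m > 0")
  case True
  have "Phi 0 < Phi (m / 2)" using True by (simp add: Phi_less_iff)
  then show ?thesis using S_one_pos[OF True] Phi_0 by simp
next
  case False
  have "Phi (m / 2) \<le> Phi 0" using False by (simp add: Phi_le_iff)
  then show ?thesis using S_one_nonpos[of m] False Phi_0 by simp
qed

lemma S_attained_or_zero:
  fixes v m :: real assumes "0 < v"
  shows "S v m = 0 \<or> (\<exists>t. S v m = Phi t - Phi ((t - m) / sqrt v))"
proof (cases "v = 1")
  case True
  show ?thesis
  proof (cases "m > 0")
    case m: True
    have "(m / 2 - m) / sqrt 1 = - (m / 2)" by simp
    then have "S 1 m = Phi (m / 2) - Phi ((m / 2 - m) / sqrt 1)"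
      using S_one_pos[OF m] Phi_minus[of "m/2"] by simp
    then show ?thesis using True by blast
  next
    case False then show ?thesis using S_one_nonpos True by simp
  qed
next
  case False then show ?thesis using S_attained_ne1 assms by blast
qed

lemma S_mono:
  fixes v :: real assumes v: "0 < v" and le: "m1 \<le> m2"
  shows "S v m1 \<le> S v m2"
  using S_attained_or_zero[OF v, of m1]
proof
  assume "S v m1 = 0" then show ?thesis using S_nonneg[of v m2] v by simp
next
  assume "\<exists>t. S v m1 = Phi t - Phi ((t - m1) / sqrt v)"
  then obtain t where t: "S v m1 = Phi t - Phi ((t - m1) / sqrt v)" by blast
  have "(t - m2) / sqrt v \<le> (t - m1) / sqrt v" using le v by (simp add: divide_right_mono)
  then have "Phi ((t - m2) / sqrt v) \<le> Phi ((t - m1) / sqrt v)" by (simp add: Phi_le_iff)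
  then show ?thesis using t S_lower_pos[OF v, of t m2] by simp
qed


lemma lin_top_top: "(c::real) > 0 \<Longrightarrow> filterlim (\<lambda>x. c * x) at_top at_top"
  by (rule filterlim_tendsto_pos_mult_at_top[OF tendsto_const _ filterlim_ident])

lemma lin_top_bot: "(c::real) < 0 \<Longrightarrow> filterlim (\<lambda>x. c * x) at_bot at_top"
  by (rule filterlim_tendsto_neg_mult_at_bot[OF tendsto_const _ filterlim_ident])

lemma lin_bot_bot: "(c::real) > 0 \<Longrightarrow> filterlim (\<lambda>x. c * x) at_bot at_bot"
  by (rule filterlim_tendsto_pos_mult_at_bot[OF tendsto_const _ filterlim_ident])

lemma pre_min_borel: "B \<in> sets borel \<Longrightarrow> (\<lambda>x::real. min x m) -` B \<in> sets borel"
  using measurable_sets[of "\<lambda>x::real. min x m" borel borel B] by simp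

lemma S_zero: "S 0 m = Phi m"
proof (rule antisym)
  define N where "N = gauss 0 1"
  have RN: "real_distribution N" unfolding N_def using real_distribution_gauss[of 1 0] by simp
  interpret n: real_distribution N by (rule RN)
  have R0: "real_distribution (gauss m 0)" using real_distribution_gauss[of 0 m] by simp
  have g0: "gauss m 0 = return borel m" by (simp add: gauss_def)
  define A where "A = distr N borel (\<lambda>x. min x m)"
  have A: "real_distribution A" unfolding A_def by (rule n.real_distribution_distr) simp
  have mA: "measure A B = measure N ((\<lambda>x. min x m) -` B)" if "B \<in> sets borel" for B
    unfolding A_def using that by (subst measure_distr) auto
  have cdfA: "Phi t \<le> cdf A t" for t
  proof -
    have "(\<lambda>x. min x m) -` {..t} \<in> sets borel" by (rule pre_min_borel) simp
    then have "measure N {..t} \<le> measure N ((\<lambda>x. min x m) -` {..t})"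
      by (intro n.finite_measure_mono) auto
    then show ?thesis using mA[of "{..t}"] by (simp add: cdf_def Phi_eq_measure N_def)
  qed
  have "tv_dist A (gauss m 0) \<le> Phi m"
  proof (rule tv_le)
    fix B :: "real set" assume B: "B \<in> sets borel"
    have mB: "measure (gauss m 0) B = indicator B m" using B by (simp add: g0 measure_return)
    show "\<bar>measure A B - measure (gauss m 0) B\<bar> \<le> Phi m"
    proof (cases "m \<in> B")
      case True
      have "measure N {m..} \<le> measure N ((\<lambda>x. min x m) -` B)"
        by (rule n.finite_measure_mono) (use True B pre_min_borel in auto)
      moreover have "measure N {m..} = 1 - Phi m" using measure_Ici_gauss[of 1 0 m] by (simp add: N_def Phi_def)
      moreover have "measure A B \<le> 1" using A by (simp add: real_distribution_def prob_space.prob_le_1)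
      ultimately show ?thesis using mA[OF B] mB True by (simp add: abs_le_iff)
    next
      case False
      have sub: "(\<lambda>x. min x m) -` B \<subseteq> {..<m}"
      proof
        fix x assume "x \<in> (\<lambda>x. min x m) -` B"
        then have "min x m \<in> B" by simp
        moreover have "\<not> x < m \<Longrightarrow> min x m = m" by simp
        ultimately show "x \<in> {..<m}" using False by (cases "x < m") auto
      qed
      have "measure N ((\<lambda>x. min x m) -` B) \<le> measure N {..<m}"
        by (rule n.finite_measure_mono[OF sub]) simp
      moreover have "measure N {..<m} = Phi m" using measure_Iio_gauss[of 1 0 m] by (simp add: N_def Phi_def)
      ultimately show ?thesis using mA[OF B] mB False by simp
    qed
  qed
  then show "S 0 m \<le> Phi m" using S_le[of 0 A m] A cdfA by force
next
  show "Phi m \<le> S 0 m"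
  proof (rule S_ge)
    fix A assume A: "real_distribution A" "\<forall>x. Phi x \<le> cdf A x"
    interpret a: real_distribution A by (rule A(1))
    have g0: "gauss m 0 = return borel m" by (simp add: gauss_def)
    have "\<bar>measure A {..<m} - measure (gauss m 0) {..<m}\<bar> \<le> tv_dist A (gauss m 0)"
      by (rule tv_ge[OF A(1) real_distribution_gauss]) auto
    moreover have "measure (gauss m 0) {..<m} = 0" by (simp add: g0 measure_return)
    moreover have "Phi m \<le> measure A {..<m}"
    proof (rule tendsto_le[OF _ a.cdf_at_left])
      show "(Phi \<longlongrightarrow> Phi m) (at_left m)"
        using isCont_Phi[of m] unfolding isCont_def by (rule tendsto_within_subset) simp
      show "\<forall>\<^sub>F x in at_left m. Phi x \<le> cdf A x" using A(2) by simp
    qed simp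
    ultimately show "Phi m \<le> tv_dist A (gauss m 0)" by simp
  qed
qed

lemma sym_aux:
  fixes s a :: real assumes "s > 0" "s \<noteq> 1"
  shows "(a / s\<^sup>2) / (1 - 1 / s\<^sup>2) = - (a / (1 - s\<^sup>2))"
proof -
  have s2: "s\<^sup>2 \<noteq> 1"
  proof
    assume "s\<^sup>2 = 1"
    then have "s = 1 \<or> s = -1" by (simp add: power2_eq_1_iff)
    then show False using assms by auto
  qed
  have s0: "s\<^sup>2 \<noteq> 0" using assms by simp
  have d: "1 - 1 / s\<^sup>2 = (s\<^sup>2 - 1) / s\<^sup>2" using s0 by (simp add: diff_divide_distrib)
  have "(a / s\<^sup>2) / ((s\<^sup>2 - 1) / s\<^sup>2) = a / (s\<^sup>2 - 1)" using s0 by simp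
  also have "\<dots> = - (a / (1 - s\<^sup>2))"
    by (metis minus_diff_eq minus_divide_right)
  finally show ?thesis unfolding d .
qed

lemma sym_alg1:
  fixes s m r :: real assumes "s > 0" "s \<noteq> 1"
  shows "(m / s - (1 / s) * (r / s)) / (1 - 1 / s\<^sup>2) = - ((s * m - r) / (1 - s\<^sup>2))"
proof -
  have "m / s - (1 / s) * (r / s) = (s * m - r) / s\<^sup>2"
    using assms by (simp add: power2_eq_square diff_divide_distrib)
  then show ?thesis using sym_aux[OF assms] by simp
qed

lemma sym_alg2:
  fixes s m r :: real assumes "s > 0" "s \<noteq> 1"
  shows "((1 / s) * (m / s) - r / s) / (1 - 1 / s\<^sup>2) = - ((m - s * r) / (1 - s\<^sup>2))"
proof -
  have "(1 / s) * (m / s) - r / s = (m - s * r) / s\<^sup>2"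
    using assms by (simp add: power2_eq_square diff_divide_distrib)
  then show ?thesis using sym_aux[OF assms] by simp
qed

lemma S_sym:
  fixes v m :: real assumes v: "v > 0"
  shows "S v m = S (1 / v) (m / sqrt v)"
proof (cases "v = 1")
  case True then show ?thesis by simp
next
  case False
  have s: "sqrt v > 0" "sqrt v \<noteq> 1" using v False by auto
  have sv: "(sqrt v)\<^sup>2 = v" using v by simp
  define D where "D = m\<^sup>2 + (v - 1) * ln v"
  have D0: "0 \<le> D" using D_nonneg[OF v] by (simp add: D_def)
  have v': "1 / v > 0" "1 / v \<noteq> 1" using v False by auto
  have inner: "(m / sqrt v)\<^sup>2 + (1 / v - 1) * ln (1 / v) = D / v"
  proof -
    have "ln (1 / v) = - ln v" using v by (simp add: ln_div)
    moreover have "(m / sqrt v)\<^sup>2 = m\<^sup>2 / v" using v by (simp add: power_divide)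
    ultimately show ?thesis using v by (simp add: D_def field_simps)
  qed
  have sq: "sqrt ((m / sqrt v)\<^sup>2 + (1 / v - 1) * ln (1 / v)) = sqrt D / sqrt v"
    unfolding inner by (simp add: real_sqrt_divide)
  have s1: "sqrt (1 / v) = 1 / sqrt v" by (simp add: real_sqrt_divide)
  have a1: "(m / sqrt v - (1 / sqrt v) * (sqrt D / sqrt v)) / (1 - 1 / v) = - ((sqrt v * m - sqrt D) / (1 - v))"
    using sym_alg1[OF s, of m "sqrt D"] unfolding sv .
  have a2: "((1 / sqrt v) * (m / sqrt v) - sqrt D / sqrt v) / (1 - 1 / v) = - ((m - sqrt v * sqrt D) / (1 - v))"
    using sym_alg2[OF s, of m "sqrt D"] unfolding sv .
  have "S (1 / v) (m / sqrt v) = Phi ((m / sqrt v - sqrt (1 / v) * sqrt ((m / sqrt v)\<^sup>2 + (1 / v - 1) * ln (1 / v))) / (1 - 1 / v))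
     - Phi ((sqrt (1 / v) * (m / sqrt v) - sqrt ((m / sqrt v)\<^sup>2 + (1 / v - 1) * ln (1 / v))) / (1 - 1 / v))"
    by (rule S_formula[OF v'])
  also have "\<dots> = Phi (- ((sqrt v * m - sqrt D) / (1 - v))) - Phi (- ((m - sqrt v * sqrt D) / (1 - v)))"
    unfolding sq s1 a1 a2 ..
  also have "\<dots> = Phi ((m - sqrt v * sqrt D) / (1 - v)) - Phi ((sqrt v * m - sqrt D) / (1 - v))"
    by (simp add: Phi_minus)
  also have "\<dots> = S v m"
    using S_formula[OF v False] by (simp add: D_def)
  finally show ?thesis ..
qed


lemma S_fun_ne1:
  fixes v :: real assumes "0 < v" "v \<noteq> 1"
  shows "S v = (\<lambda>m. Phi ((m - sqrt v * sqrt (m\<^sup>2 + (v - 1) * ln v)) / (1 - v))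
               - Phi ((sqrt v * m - sqrt (m\<^sup>2 + (v - 1) * ln v)) / (1 - v)))"
  by (rule ext) (rule S_formula[OF assms])

lemma S_fun_one: "S 1 = (\<lambda>m. max (2 * Phi (m / 2) - 1) 0)"
  by (rule ext) (rule S_one)

lemma isCont_S:
  fixes v :: real assumes "0 < v"
  shows "isCont (S v) m"
proof (cases "v = 1")
  case True
  show ?thesis unfolding True S_fun_one by (intro continuous_intros) simp_all
next
  case False
  show ?thesis unfolding S_fun_ne1[OF assms False] using False by (intro continuous_intros) simp_all
qed

lemma S_top:
  fixes v :: real assumes v: "0 < v"
  shows "(S v \<longlongrightarrow> 1) at_top"
proof (rule tendsto_sandwich)
  let ?L = "\<lambda>m. Phi ((1/2) * m) - Phi ((-1 / (2 * sqrt v)) * m)"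
  show "\<forall>\<^sub>F m in at_top. ?L m \<le> S v m"
  proof (intro always_eventually allI)
    fix m :: real
    have "(m / 2 - m) / sqrt v = (-1 / (2 * sqrt v)) * m" by (simp add: field_simps)
    then show "?L m \<le> S v m" using S_lower_pos[OF v, of "m / 2" m] by simp
  qed
  show "\<forall>\<^sub>F m in at_top. S v m \<le> 1" using S_le1[of v] v by simp
  have neg: "-1 / (2 * sqrt v) < 0" using v by (simp add: divide_neg_pos)
  have "(?L \<longlongrightarrow> 1 - 0) at_top"
    by (intro tendsto_diff filterlim_compose[OF Phi_at_top lin_top_top]
        filterlim_compose[OF Phi_at_bot lin_top_bot[OF neg]]) simp
  then show "(?L \<longlongrightarrow> 1) at_top" by simp
qed simp

lemma S_bot_lt1:
  fixes v :: real assumes v: "0 < v" "v < 1"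
  shows "(S v \<longlongrightarrow> 0) at_bot"
proof (rule tendsto_sandwich)
  show "\<forall>\<^sub>F m in at_bot. 0 \<le> S v m" using S_nonneg[of v] v by simp
  let ?U = "\<lambda>m. Phi ((1 / (1 - v)) * m)"
  show "\<forall>\<^sub>F m in at_bot. S v m \<le> ?U m"
  proof (intro always_eventually allI)
    fix m :: real
    define D where "D = m\<^sup>2 + (v - 1) * ln v"
    have D0: "0 \<le> D" using D_nonneg[of v m] v by (simp add: D_def)
    have "(m - sqrt v * sqrt D) / (1 - v) \<le> (1 / (1 - v)) * m"
      using v D0 by (simp add: divide_right_mono)
    then have "Phi ((m - sqrt v * sqrt D) / (1 - v)) \<le> ?U m" by (simp add: Phi_le_iff)
    moreover have "S v m = Phi ((m - sqrt v * sqrt D) / (1 - v)) - Phi ((sqrt v * m - sqrt D) / (1 - v))"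
      using S_formula[of v m] v by (simp add: D_def)
    moreover have "0 \<le> Phi ((sqrt v * m - sqrt D) / (1 - v))" by (rule Phi_nonneg)
    ultimately show "S v m \<le> ?U m" by simp
  qed
  have "1 / (1 - v) > 0" using v by simp
  then show "(?U \<longlongrightarrow> 0) at_bot"
    by (intro filterlim_compose[OF Phi_at_bot lin_bot_bot])
qed simp

lemma S_bot:
  fixes v :: real assumes v: "0 < v"
  shows "(S v \<longlongrightarrow> 0) at_bot"
proof -
  consider "v < 1" | "v = 1" | "v > 1" by linarith
  then show ?thesis
  proof cases
    case 1 then show ?thesis using S_bot_lt1 v by simp
  next
    case 2
    have "\<forall>\<^sub>F m in at_bot. S v m = 0"
      using eventually_le_at_bot[of 0] by eventually_elim (simp add: 2 S_one_nonpos)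
    then show ?thesis by (rule tendsto_eventually)
  next
    case 3
    have "S v = (\<lambda>m. S (1 / v) ((1 / sqrt v) * m))"
      by (rule ext) (simp add: S_sym[OF v])
    moreover have "((\<lambda>m. S (1 / v) ((1 / sqrt v) * m)) \<longlongrightarrow> 0) at_bot"
      by (rule filterlim_compose[OF S_bot_lt1 lin_bot_bot]) (use v 3 in auto)
    ultimately show ?thesis by simp
  qed
qed

lemma S_cdf_exists:
  fixes v :: real assumes "v \<ge> 0"
  shows "\<exists>M. real_distribution M \<and> cdf M = S v"
proof (cases "v = 0")
  case True
  have "S 0 = Phi" by (rule ext) (rule S_zero)
  then show ?thesis using True real_distribution_gauss[of 1 0] cdf_gauss01 by auto
next
  case False
  then have v: "v > 0" using assms by simp
  have mono: "\<And>x y. x \<le> y \<Longrightarrow> S v x \<le> S v y" using S_mono[OF v] by blast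
  have rc: "\<And>a. continuous (at_right a) (S v)"
    using isCont_S[OF v] by (simp add: continuous_at_imp_continuous_at_within)
  show ?thesis
    using real_distribution_interval_measure[OF mono rc S_bot[OF v] S_top[OF v]]
      cdf_interval_measure[OF mono rc S_bot[OF v]] by blast
qed


lemma S_upper_lt1:
  fixes v m :: real assumes v: "0 < v" "v < 1"
  shows "S v m \<le> Phi (m / (1 - v))"
proof -
  define D where "D = m\<^sup>2 + (v - 1) * ln v"
  have D0: "0 \<le> D" using D_nonneg[of v m] v by (simp add: D_def)
  have "(m - sqrt v * sqrt D) / (1 - v) \<le> m / (1 - v)"
    using v D0 by (simp add: divide_right_mono)
  then have "Phi ((m - sqrt v * sqrt D) / (1 - v)) \<le> Phi (m / (1 - v))" by (simp add: Phi_le_iff)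
  moreover have "S v m = Phi ((m - sqrt v * sqrt D) / (1 - v)) - Phi ((sqrt v * m - sqrt D) / (1 - v))"
    using S_formula[of v m] v by (simp add: D_def)
  moreover have "0 \<le> Phi ((sqrt v * m - sqrt D) / (1 - v))" by (rule Phi_nonneg)
  ultimately show ?thesis by simp
qed

lemma S_limit:
  fixes mu :: real
  shows "((\<lambda>nu. S nu (sqrt nu * mu)) \<longlongrightarrow> Phi mu) at_top"
proof (rule tendsto_sandwich)
  let ?L = "\<lambda>nu. Phi (mu - inverse (sqrt (sqrt nu))) - Phi (- sqrt (sqrt nu))"
  let ?U = "\<lambda>nu::real. Phi (mu / (1 - inverse nu))"
  have ev: "\<forall>\<^sub>F nu in at_top. S nu (sqrt nu * mu) = S (1 / nu) mu"
    using eventually_gt_at_top[of 0]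
  proof eventually_elim
    case (elim nu)
    have "sqrt nu * mu / sqrt nu = mu" using elim by simp
    then show ?case using S_sym[OF elim, of "sqrt nu * mu"] by simp
  qed
  show "\<forall>\<^sub>F nu in at_top. ?L nu \<le> S nu (sqrt nu * mu)"
    using ev eventually_gt_at_top[of 0]
  proof eventually_elim
    case (elim nu)
    have "(mu - inverse (sqrt (sqrt nu)) - mu) / sqrt (1 / nu) = - sqrt (sqrt nu)"
    proof -
      define q where "q = sqrt (sqrt nu)"
      have qp: "q > 0" using elim(2) by (simp add: q_def)
      have sn: "sqrt nu = q * q" using elim(2) by (simp add: q_def)
      have e: "sqrt (1 / nu) = 1 / (q * q)" by (simp add: real_sqrt_divide sn)
      have "(mu - inverse q - mu) / sqrt (1 / nu) = - q" unfolding e using qp by (simp add: field_simps)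
      then show ?thesis by (simp add: q_def)
    qed
    then show ?case using S_lower_pos[of "1 / nu" "mu - inverse (sqrt (sqrt nu))" mu] elim by simp
  qed
  show "\<forall>\<^sub>F nu in at_top. S nu (sqrt nu * mu) \<le> ?U nu"
    using ev eventually_gt_at_top[of 1]
  proof eventually_elim
    case (elim nu)
    then show ?case using S_upper_lt1[of "1 / nu" mu] by (simp add: inverse_eq_divide)
  qed
  have s2: "filterlim (\<lambda>nu::real. sqrt (sqrt nu)) at_top at_top"
    by (rule filterlim_compose[OF sqrt_at_top sqrt_at_top])
  have "(?L \<longlongrightarrow> Phi (mu - 0) - 0) at_top"
  proof (intro tendsto_diff)
    show "((\<lambda>nu. Phi (mu - inverse (sqrt (sqrt nu)))) \<longlongrightarrow> Phi (mu - 0)) at_top"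
      by (intro isCont_tendsto_compose[OF isCont_Phi] tendsto_diff tendsto_const tendsto_inverse_0_at_top s2)
    show "((\<lambda>nu. Phi (- sqrt (sqrt nu))) \<longlongrightarrow> 0) at_top"
      by (rule filterlim_compose[OF Phi_at_bot]) (use s2 in \<open>simp add: filterlim_uminus_at_top[symmetric]\<close>)
  qed
  then show "(?L \<longlongrightarrow> Phi mu) at_top" by simp
  have "(?U \<longlongrightarrow> Phi (mu / (1 - 0))) at_top"
    by (intro isCont_tendsto_compose[OF isCont_Phi] tendsto_divide tendsto_diff tendsto_const
        tendsto_inverse_0_at_top filterlim_ident) simp
  then show "(?U \<longlongrightarrow> Phi mu) at_top" by simp
qed


lemma S_ge_iff:
  fixes v eps mu :: real assumes v: "0 < v" and e: "0 < eps"
  shows "eps \<le> S v mu \<longleftrightarrow> (\<exists>t. eps \<le> Phi t - Phi ((t - mu) / sqrt v))"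
proof
  assume "eps \<le> S v mu"
  then have "S v mu \<noteq> 0" using e by auto
  then show "\<exists>t. eps \<le> Phi t - Phi ((t - mu) / sqrt v)"
    using S_attained_or_zero[OF v, of mu] \<open>eps \<le> S v mu\<close> by auto
next
  assume "\<exists>t. eps \<le> Phi t - Phi ((t - mu) / sqrt v)"
  then show "eps \<le> S v mu" using S_lower_pos[OF v] by (meson order_trans)
qed

definition gfun :: "real \<Rightarrow> real \<Rightarrow> real \<Rightarrow> real" where
  "gfun v eps t = t - sqrt v * Phi_inv (Phi t - eps)"

lemma gfun_iff:
  fixes v eps mu t :: real assumes v: "0 < v" and e: "0 < eps" and pt: "eps < Phi t"
  shows "eps \<le> Phi t - Phi ((t - mu) / sqrt v) \<longleftrightarrow> gfun v eps t \<le> mu"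
proof -
  have p: "0 < Phi t - eps" "Phi t - eps < 1" using pt e Phi_less1[of t] by auto
  have "eps \<le> Phi t - Phi ((t - mu) / sqrt v) \<longleftrightarrow> Phi ((t - mu) / sqrt v) \<le> Phi t - eps" by auto
  also have "\<dots> \<longleftrightarrow> (t - mu) / sqrt v \<le> Phi_inv (Phi t - eps)" using le_Phi_inv_iff[OF p] by simp
  also have "\<dots> \<longleftrightarrow> t - mu \<le> sqrt v * Phi_inv (Phi t - eps)"
    using v by (simp add: pos_divide_le_eq mult.commute)
  also have "\<dots> \<longleftrightarrow> gfun v eps t \<le> mu" by (auto simp: gfun_def)
  finally show ?thesis .
qed

lemma S_set_char:
  fixes v eps :: real assumes v: "0 < v" and e: "0 < eps"
  shows "{mu. eps \<le> S v mu} = {mu. \<exists>t. eps < Phi t \<and> gfun v eps t \<le> mu}"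
proof (intro set_eqI iffI; simp)
  fix mu assume "eps \<le> S v mu"
  then obtain t where t: "eps \<le> Phi t - Phi ((t - mu) / sqrt v)" using S_ge_iff[OF v e] by auto
  then have pt: "eps < Phi t" using Phi_pos[of "(t - mu) / sqrt v"] by simp
  then show "\<exists>t. eps < Phi t \<and> gfun v eps t \<le> mu" using gfun_iff[OF v e pt] t by auto
next
  fix mu assume "\<exists>t. eps < Phi t \<and> gfun v eps t \<le> mu"
  then obtain t where "eps < Phi t" "gfun v eps t \<le> mu" by auto
  then show "eps \<le> S v mu" using gfun_iff[OF v e] S_ge_iff[OF v e] by blast
qed

lemma S_inv_gfun:
  fixes v eps :: real assumes v: "0 < v" and e: "0 < eps" "eps < 1"
  shows "\<exists>t0. eps < Phi t0 \<and> S_inv v eps = gfun v eps t0 \<and> (\<forall>t. eps < Phi t \<longrightarrow> S_inv v eps \<le> gfun v eps t)"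
proof -
  define T where "T = {mu. eps \<le> S v mu}"
  have T: "T = {mu. \<exists>t. eps < Phi t \<and> gfun v eps t \<le> mu}" unfolding T_def by (rule S_set_char[OF v e(1)])
  have mem: "gfun v eps t \<in> T" if "eps < Phi t" for t using that T by auto
  obtain t1 where t1: "Phi t1 = (1 + eps) / 2" using Phi_surj[of "(1 + eps) / 2"] e by auto
  have ne: "T \<noteq> {}" using mem[of t1] t1 e by auto
  have bdd: "bdd_below T"
  proof (rule bdd_belowI)
    fix mu assume "mu \<in> T"
    then obtain t where t: "eps < Phi t" "gfun v eps t \<le> mu" using T by auto
    have a: "Phi_inv eps \<le> t" using Phi_inv_le_iff[of eps t] e t by simp
    have "Phi_inv (Phi t - eps) \<le> Phi_inv (1 - eps)"
      using Phi_inv_mono[of "Phi t - eps" "1 - eps"] t e Phi_less1[of t] by simp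
    then have "sqrt v * Phi_inv (Phi t - eps) \<le> sqrt v * Phi_inv (1 - eps)"
      using v by (simp add: mult_left_mono)
    then show "Phi_inv eps - sqrt v * Phi_inv (1 - eps) \<le> mu" using a t(2) by (simp add: gfun_def)
  qed
  have cl: "closed T"
  proof -
    have "closed {mu. (\<lambda>_. eps) mu \<le> S v mu}"
      by (rule closed_Collect_le) (auto intro: continuous_at_imp_continuous_on isCont_S[OF v])
    then show ?thesis by (simp add: T_def)
  qed
  have "Inf T \<in> T" by (rule closed_contains_Inf[OF ne bdd cl])
  then obtain t0 where t0: "eps < Phi t0" "gfun v eps t0 \<le> Inf T" using T by auto
  have low: "Inf T \<le> gfun v eps t" if "eps < Phi t" for t
    by (rule cInf_lower[OF mem[OF that] bdd])
  have "S_inv v eps = Inf T" by (simp add: S_inv_def T_def)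
  then show ?thesis using t0 low[OF t0(1)] low by (intro exI[of _ t0]) auto
qed

definition kfun :: "real \<Rightarrow> real \<Rightarrow> real \<Rightarrow> real" where
  "kfun v eps x = sqrt v * Phi_inv x - Phi_inv (x - eps)"

lemma kfun_gfun:
  fixes v eps x :: real assumes e: "0 < eps" and x: "eps < x" "x < 1"
  shows "kfun v eps x = gfun v eps (Phi_inv (1 + eps - x))"
proof -
  have p: "0 < 1 + eps - x" "1 + eps - x < 1" using x e by auto
  have "Phi (Phi_inv (1 + eps - x)) = 1 + eps - x" by (rule Phi_Phi_inv[OF p])
  then have "gfun v eps (Phi_inv (1 + eps - x)) = Phi_inv (1 + eps - x) - sqrt v * Phi_inv (1 - x)"
    by (simp add: gfun_def)
  moreover have "Phi_inv (1 - x) = - Phi_inv x" using Phi_inv_one_minus[of x] x e by simp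
  moreover have "Phi_inv (1 + eps - x) = - Phi_inv (x - eps)"
    using Phi_inv_one_minus[of "x - eps"] x e by (simp add: algebra_simps)
  ultimately show ?thesis by (simp add: kfun_def)
qed

lemma S_inv_min:
  fixes v eps :: real assumes v: "0 < v" and e: "0 < eps" "eps < 1"
  shows "\<exists>x0\<in>{eps<..<1}. S_inv v eps = kfun v eps x0 \<and> (\<forall>x\<in>{eps<..<1}. kfun v eps x0 \<le> kfun v eps x)"
proof -
  obtain t0 where t0: "eps < Phi t0" "S_inv v eps = gfun v eps t0"
    and low: "\<And>t. eps < Phi t \<Longrightarrow> S_inv v eps \<le> gfun v eps t"
    using S_inv_gfun[OF v e] by blast
  define x0 where "x0 = 1 + eps - Phi t0"
  have x0: "x0 \<in> {eps<..<1}" using t0(1) Phi_less1[of t0] by (auto simp: x0_def)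
  have k0: "kfun v eps x0 = S_inv v eps"
    using kfun_gfun[of eps x0 v] x0 e t0(2) by (simp add: x0_def)
  have "kfun v eps x0 \<le> kfun v eps x" if x: "x \<in> {eps<..<1}" for x
  proof -
    have p: "0 < 1 + eps - x" "1 + eps - x < 1" using x e by auto
    have "eps < Phi (Phi_inv (1 + eps - x))" using Phi_Phi_inv[OF p] x by simp
    then show ?thesis using low kfun_gfun[of eps x v] x e k0 by auto
  qed
  then show ?thesis using x0 k0 by (intro bexI[of _ x0]) auto
qed


lemma kfun_sym:
  fixes v eps x :: real assumes v: "0 < v" and e: "0 < eps" and x: "eps < x" "x < 1"
  shows "sqrt v * kfun (1 / v) eps x = kfun v eps (1 + eps - x)"
proof -
  have a: "Phi_inv (1 - x) = - Phi_inv x" using Phi_inv_one_minus[of x] x e by simp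
  have b: "Phi_inv (1 + eps - x) = - Phi_inv (x - eps)"
    using Phi_inv_one_minus[of "x - eps"] x e by (simp add: algebra_simps)
  have c: "sqrt v * sqrt (1 / v) = 1" using v by (simp add: real_sqrt_divide)
  have "sqrt v * kfun (1 / v) eps x = (sqrt v * sqrt (1 / v)) * Phi_inv x - sqrt v * Phi_inv (x - eps)"
    by (simp add: kfun_def algebra_simps)
  also have "\<dots> = Phi_inv x - sqrt v * Phi_inv (x - eps)" unfolding c by simp
  also have "\<dots> = kfun v eps (1 + eps - x)"
    by (simp add: kfun_def a b)
  finally show ?thesis .
qed

lemma S_inv_scale:
  fixes v eps :: real assumes v: "0 < v" and e: "0 < eps" "eps < 1"
  shows "S_inv v eps = sqrt v * S_inv (1 / v) eps"
proof -
  have v': "0 < 1 / v" using v by simp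
  obtain x0 where x0: "x0 \<in> {eps<..<1}" "S_inv v eps = kfun v eps x0"
    and m0: "\<And>x. x \<in> {eps<..<1} \<Longrightarrow> kfun v eps x0 \<le> kfun v eps x"
    using S_inv_min[OF v e] by blast
  obtain x1 where x1: "x1 \<in> {eps<..<1}" "S_inv (1 / v) eps = kfun (1 / v) eps x1"
    and m1: "\<And>x. x \<in> {eps<..<1} \<Longrightarrow> kfun (1 / v) eps x1 \<le> kfun (1 / v) eps x"
    using S_inv_min[OF v' e] by blast
  have y1: "1 + eps - x1 \<in> {eps<..<1}" using x1(1) by auto
  have y0: "1 + eps - x0 \<in> {eps<..<1}" using x0(1) by auto
  have "sqrt v * S_inv (1 / v) eps = kfun v eps (1 + eps - x1)"
    using x1 kfun_sym[OF v e(1), of x1] by simp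
  also have "\<dots> \<ge> kfun v eps x0" using m0[OF y1] .
  finally have i1: "S_inv v eps \<le> sqrt v * S_inv (1 / v) eps" using x0(2) by simp
  have "S_inv v eps = kfun v eps (1 + eps - (1 + eps - x0))" using x0(2) by simp
  also have "\<dots> = sqrt v * kfun (1 / v) eps (1 + eps - x0)"
    using kfun_sym[OF v e(1), of "1 + eps - x0"] y0 by simp
  also have "\<dots> \<ge> sqrt v * kfun (1 / v) eps x1"
    using m1[OF y0] v by (simp add: mult_left_mono)
  finally have i2: "sqrt v * S_inv (1 / v) eps \<le> S_inv v eps" using x1(2) by simp
  show ?thesis using i1 i2 by simp
qed

theorem lemma1:
  shows "(\<forall>nu::real. nu \<ge> 0 \<longrightarrow> (\<exists>M. real_distribution M \<and> cdf M = S nu))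
   \<and> (\<forall>nu mu::real. nu > 0 \<and> nu \<noteq> 1 \<longrightarrow>
        S nu mu = Phi ((mu - sqrt nu * sqrt (mu\<^sup>2 + (nu - 1) * ln nu)) / (1 - nu))
                - Phi ((sqrt nu * mu - sqrt (mu\<^sup>2 + (nu - 1) * ln nu)) / (1 - nu)))
   \<and> (\<forall>nu eps::real. 0 < nu \<and> 0 < eps \<and> eps < 1 \<longrightarrow>
        (\<exists>x0\<in>{eps<..<1}.
           S_inv nu eps = sqrt nu * Phi_inv x0 - Phi_inv (x0 - eps) \<and>
           (\<forall>x\<in>{eps<..<1}. sqrt nu * Phi_inv x0 - Phi_inv (x0 - eps)
                              \<le> sqrt nu * Phi_inv x - Phi_inv (x - eps))))
   \<and> (\<forall>mu::real. S 0 mu = Phi mu \<and> ((\<lambda>nu. S nu (sqrt nu * mu)) \<longlongrightarrow> Phi mu) at_top)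
   \<and> (\<forall>mu::real. S 1 mu = max (2 * Phi (mu / 2) - 1) 0)
   \<and> (\<forall>nu mu::real. nu > 0 \<longrightarrow> S nu mu = S (1 / nu) (mu / sqrt nu))
   \<and> (\<forall>nu eps::real. nu > 0 \<and> 0 < eps \<and> eps < 1 \<longrightarrow> S_inv nu eps = sqrt nu * S_inv (1 / nu) eps)"
proof (intro conjI allI impI)
  fix nu :: real assume "nu \<ge> 0" then show "\<exists>M. real_distribution M \<and> cdf M = S nu" by (rule S_cdf_exists)
next
  fix nu mu :: real assume "nu > 0 \<and> nu \<noteq> 1"
  then show "S nu mu = Phi ((mu - sqrt nu * sqrt (mu\<^sup>2 + (nu - 1) * ln nu)) / (1 - nu))
                - Phi ((sqrt nu * mu - sqrt (mu\<^sup>2 + (nu - 1) * ln nu)) / (1 - nu))"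
    using S_formula by blast
next
  fix nu eps :: real assume a: "0 < nu \<and> 0 < eps \<and> eps < 1"
  then show "\<exists>x0\<in>{eps<..<1}.
           S_inv nu eps = sqrt nu * Phi_inv x0 - Phi_inv (x0 - eps) \<and>
           (\<forall>x\<in>{eps<..<1}. sqrt nu * Phi_inv x0 - Phi_inv (x0 - eps)
                              \<le> sqrt nu * Phi_inv x - Phi_inv (x - eps))"
    using S_inv_min[of nu eps] unfolding kfun_def by blast
next
  fix mu :: real show "S 0 mu = Phi mu" by (rule S_zero)
next
  fix mu :: real show "((\<lambda>nu. S nu (sqrt nu * mu)) \<longlongrightarrow> Phi mu) at_top" by (rule S_limit)
next
  fix mu :: real show "S 1 mu = max (2 * Phi (mu / 2) - 1) 0" by (rule S_one)
next
  fix nu mu :: real assume "nu > 0" then show "S nu mu = S (1 / nu) (mu / sqrt nu)" by (rule S_sym)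
next
  fix nu eps :: real assume "nu > 0 \<and> 0 < eps \<and> eps < 1"
  then show "S_inv nu eps = sqrt nu * S_inv (1 / nu) eps" using S_inv_scale by blast
qed


end
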